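(* Consider the procurement setting below with an XOS valuation $v$. The randomized mechanism XOS-Main (described below) is budget feasible and (universally) truthful, and there is an absolute constant $C$ such that for every cost vector $c$ (with $c(i)\le B$ for all $i$), $v(\mathrm{OPT}(c))\le C\cdot \mathbb{E}[\text{value of the winning set of XOS-Main on } c]$, where agents bid truthfully. XOS-Main: with probability $\frac12$ run XOS-Random-Sample; with probability $\frac12$ pick an item $i\in\arg\max_{i\in A}v(\{i\})$ as the only winner and pay it $B$. XOS-Random-Sample (on bids $b$): (1) put each item independently with probability $\frac12$ into a set $T$; (2) compute an optimal solution $\mathrm{OPT}(T)$, i.e. a set maximizing $v(S)$ over $S\subseteq T$ with $b(S)\le B$; (3) set $t=\frac{v(\mathrm{OPT}(T))}{8B}$; (4) find $S^*\in\arg\max_{S\subseteq A\setminus T}\{v(S)-t\cdot b(S)\}$, ties broken by a fixed order; (5) find an additive function $f$ in the XOS representation of $v$ with $f(S^* )=v(S^* )$; (6) run AddM for the additive valuation $f$ on item set $S^*$ with budget $B$; (7) output the result of AddM. Winners are paid their threshold payments.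
   Context: Setting: a buyer with budget $B>0$ and a set $A$ of $n$ agents (items); agent $i$ has a private cost $c(i)\ge 0$ (assumed $\le B$). The valuation $v:2^A\to\mathbb{R}_{\ge0}$ is public, monotone, with $v(\emptyset)=0$; it is XOS: $v(S)=\max\{f_1(S),\dots,f_m(S)\}$ for nonnegative additive functions $f_j$ ($f_j(S)=\sum_{i\in S}f_j(i)$). $\mathrm{OPT}(c)$ is a set maximizing $v(S)$ subject to $c(S)=\sum_{i\in S}c(i)\le B$. A mechanism receives bids $b(i)$, selects winners $S$ and payments $p(i)$, with $p(i)=0$ for $i\notin S$ and $p(i)\ge b(i)$ for $i\in S$; an agent's utility is $p(i)-c(i)$ if it wins and $0$ otherwise. A deterministic mechanism is truthful if bidding $b(i)=c(i)$ is a dominant strategy for every agent; a randomized mechanism is (universally) truthful if it is a probability distribution over deterministic truthful mechanisms. It is budget feasible if $\sum_i p(i)\le B$ always. The threshold payment of a winner under a monotone allocation rule is the supremum of bids with which it would still win. AddM denotes a fixed universally truthful, budget feasible mechanism for additive valuations (from prior work) whose approximation ratio is at most $3$. *)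

theory Defs
  imports "HOL-Probability.Probability"
begin

text \<open>Agents have type 'a; the agent set A is a finite subset.
  A bid (or cost) profile is a function 'a => real.
  A deterministic mechanism maps a bid profile to (winners, payments).\<close>

type_synonym 'a mech = "('a \<Rightarrow> real) \<Rightarrow> 'a set \<times> ('a \<Rightarrow> real)"

definition xos :: "('a \<Rightarrow> real) set \<Rightarrow> 'a set \<Rightarrow> real" where
  "xos F S = Max ((\<lambda>f. sum f S) ` F)"

definition xos_rep :: "'a set \<Rightarrow> ('a \<Rightarrow> real) set \<Rightarrow> bool" where
  "xos_rep A F \<longleftrightarrow> finite F \<and> F \<noteq> {} \<and> (\<forall>f\<in>F. \<forall>i\<in>A. 0 \<le> f i)"

definition opt_val :: "('a set \<Rightarrow> real) \<Rightarrow> 'a set \<Rightarrow> ('a \<Rightarrow> real) \<Rightarrow> real \<Rightarrow> real" where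
  "opt_val v S b B = Max (v ` {X. X \<subseteq> S \<and> sum b X \<le> B})"

definition valid :: "'a set \<Rightarrow> real \<Rightarrow> ('a \<Rightarrow> real) \<Rightarrow> bool" where
  "valid S B b \<longleftrightarrow> (\<forall>i\<in>S. 0 \<le> b i \<and> b i \<le> B)"

definition utility :: "'a \<Rightarrow> real \<Rightarrow> 'a set \<times> ('a \<Rightarrow> real) \<Rightarrow> real" where
  "utility i ci out = (if i \<in> fst out then snd out i - ci else 0)"

definition is_mech :: "'a set \<Rightarrow> real \<Rightarrow> 'a mech \<Rightarrow> bool" where
  "is_mech S B M \<longleftrightarrow>
     (\<forall>b b'. (\<forall>j\<in>S. b j = b' j) \<longrightarrow> M b = M b') \<and>
     (\<forall>b. valid S B b \<longrightarrow>
        fst (M b) \<subseteq> S \<and> (\<forall>i. i \<notin> fst (M b) \<longrightarrow> snd (M b) i = 0) \<and>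
        (\<forall>i\<in>fst (M b). b i \<le> snd (M b) i))"

definition truthful :: "'a set \<Rightarrow> real \<Rightarrow> 'a mech \<Rightarrow> bool" where
  "truthful S B M \<longleftrightarrow>
     (\<forall>c b i. valid S B c \<longrightarrow> valid S B b \<longrightarrow> i \<in> S \<longrightarrow>
        utility i (c i) (M b) \<le> utility i (c i) (M (b(i := c i))))"

definition budget_feasible :: "'a set \<Rightarrow> real \<Rightarrow> 'a mech \<Rightarrow> bool" where
  "budget_feasible S B M \<longleftrightarrow> (\<forall>b. valid S B b \<longrightarrow> sum (snd (M b)) S \<le> B)"

definition univ_truthful_bf :: "'a set \<Rightarrow> real \<Rightarrow> 'a mech pmf \<Rightarrow> bool" where
  "univ_truthful_bf S B P \<longleftrightarrow>
     (\<forall>M\<in>set_pmf P. is_mech S B M \<and> truthful S B M \<and> budget_feasible S B M)"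

definition threshold :: "real \<Rightarrow> (('a \<Rightarrow> real) \<Rightarrow> 'a set) \<Rightarrow> ('a \<Rightarrow> real) \<Rightarrow> 'a \<Rightarrow> real" where
  "threshold B alloc b i = Sup {x. 0 \<le> x \<and> x \<le> B \<and> i \<in> alloc (b(i := x))}"

definition threshold_mech :: "real \<Rightarrow> (('a \<Rightarrow> real) \<Rightarrow> 'a set) \<Rightarrow> 'a mech" where
  "threshold_mech B alloc b =
     (alloc b, (\<lambda>i. if i \<in> alloc b then threshold B alloc b i else 0))"

text \<open>Argmax with ties broken by a fixed order (given by an injective rk on sets).\<close>
definition tb_argmax :: "('a set \<Rightarrow> nat) \<Rightarrow> 'a set set \<Rightarrow> ('a set \<Rightarrow> real) \<Rightarrow> 'a set" where
  "tb_argmax rk D g =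
     (THE S. S \<in> D \<and> (\<forall>S'\<in>D. g S' \<le> g S) \<and> (\<forall>S'\<in>D. g S' = g S \<longrightarrow> rk S \<le> rk S'))"

text \<open>Allocation rule of XOS-Random-Sample for a fixed sample T and a fixed random seed w
  of AddM. addm w S f B is the deterministic mechanism AddM runs for seed w,
  on item set S with additive valuation f and budget B.
  sel S is the additive function of the XOS representation chosen in step (5).\<close>
definition rs_alloc ::
  "'a set \<Rightarrow> real \<Rightarrow> ('a \<Rightarrow> real) set \<Rightarrow> ('a set \<Rightarrow> ('a \<Rightarrow> real)) \<Rightarrow> ('a set \<Rightarrow> nat)
   \<Rightarrow> ('r \<Rightarrow> 'a set \<Rightarrow> ('a \<Rightarrow> real) \<Rightarrow> real \<Rightarrow> 'a mech) \<Rightarrow> 'r \<Rightarrow> 'a set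
   \<Rightarrow> ('a \<Rightarrow> real) \<Rightarrow> 'a set" where
  "rs_alloc A B F sel rk addm w T b =
     (let t = opt_val (xos F) T b B / (8 * B);
          Sstar = tb_argmax rk (Pow (A - T)) (\<lambda>S. xos F S - t * sum b S);
          f = sel Sstar
      in fst (addm w Sstar f B b))"

definition rs_mech ::
  "'a set \<Rightarrow> real \<Rightarrow> ('a \<Rightarrow> real) set \<Rightarrow> ('a set \<Rightarrow> ('a \<Rightarrow> real)) \<Rightarrow> ('a set \<Rightarrow> nat)
   \<Rightarrow> ('r \<Rightarrow> 'a set \<Rightarrow> ('a \<Rightarrow> real) \<Rightarrow> real \<Rightarrow> 'a mech) \<Rightarrow> 'r \<Rightarrow> 'a set \<Rightarrow> 'a mech" where
  "rs_mech A B F sel rk addm w T = threshold_mech B (rs_alloc A B F sel rk addm w T)"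

definition best_single :: "'a set \<Rightarrow> ('a \<Rightarrow> real) set \<Rightarrow> 'a" where
  "best_single A F = (SOME i. i \<in> A \<and> (\<forall>j\<in>A. xos F {j} \<le> xos F {i}))"

definition single_mech :: "'a set \<Rightarrow> real \<Rightarrow> ('a \<Rightarrow> real) set \<Rightarrow> 'a mech" where
  "single_mech A B F b =
     ({best_single A F}, (\<lambda>i. if i = best_single A F then B else 0))"

text \<open>XOS-Main as a distribution over deterministic mechanisms: a fair coin chooses the branch;
  T is a uniformly random subset of A (each item independently with probability 1/2);
  w is the random seed of AddM, drawn from R.\<close>
definition xos_main ::
  "'a set \<Rightarrow> real \<Rightarrow> ('a \<Rightarrow> real) set \<Rightarrow> ('a set \<Rightarrow> ('a \<Rightarrow> real)) \<Rightarrow> ('a set \<Rightarrow> nat)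
   \<Rightarrow> ('r \<Rightarrow> 'a set \<Rightarrow> ('a \<Rightarrow> real) \<Rightarrow> real \<Rightarrow> 'a mech) \<Rightarrow> 'r pmf \<Rightarrow> 'a mech pmf" where
  "xos_main A B F sel rk addm R =
     map_pmf (\<lambda>(coin, T, w). if coin then rs_mech A B F sel rk addm w T else single_mech A B F)
       (pair_pmf (bernoulli_pmf (1/2)) (pair_pmf (pmf_of_set (Pow A)) R))"

definition addm_ok ::
  "'a set \<Rightarrow> real \<Rightarrow> ('r \<Rightarrow> 'a set \<Rightarrow> ('a \<Rightarrow> real) \<Rightarrow> real \<Rightarrow> 'a mech) \<Rightarrow> 'r pmf \<Rightarrow> bool" where
  "addm_ok A B addm R \<longleftrightarrow>
     (\<forall>S f. S \<subseteq> A \<longrightarrow> (\<forall>i\<in>S. 0 \<le> f i) \<longrightarrow>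
        (\<forall>w\<in>set_pmf R. is_mech S B (addm w S f B) \<and> truthful S B (addm w S f B)
                         \<and> budget_feasible S B (addm w S f B)) \<and>
        (\<forall>c. valid S B c \<longrightarrow>
           opt_val (\<lambda>X. sum f X) S c B
             \<le> 3 * measure_pmf.expectation R (\<lambda>w. sum f (fst (addm w S f B c)))))"

end

theory Submission
  imports Defs
begin


lemma integral_bind_pmf_bounded:
  fixes f :: "'b \<Rightarrow> real"
  assumes "\<And>y. \<bar>f y\<bar> \<le> Bd"
  shows "measure_pmf.expectation (bind_pmf M N) f = measure_pmf.expectation M (\<lambda>x. measure_pmf.expectation (N x) f)"
  using measurable_measure_pmf[of N] assms unfolding measure_pmf_bind
  by (intro integral_bind[where K="count_space UNIV" and B=Bd and B'=1])
     (auto intro: measure_pmf.finite_measure simp: measure_pmf.emeasure_space_1)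

lemma integral_pair_pmf_bounded:
  fixes H :: "'a \<times> 'b \<Rightarrow> real"
  assumes "\<And>z. \<bar>H z\<bar> \<le> Bd"
  shows "measure_pmf.expectation (pair_pmf p q) H = measure_pmf.expectation p (\<lambda>x. measure_pmf.expectation q (\<lambda>y. H (x,y)))"
proof -
  have "measure_pmf.expectation (pair_pmf p q) H = measure_pmf.expectation p (\<lambda>x. measure_pmf.expectation (bind_pmf q (\<lambda>y. return_pmf (x, y))) H)"
    unfolding pair_pmf_def by (rule integral_bind_pmf_bounded[OF assms])
  also have "\<dots> = measure_pmf.expectation p (\<lambda>x. measure_pmf.expectation q (\<lambda>y. H (x,y)))"
    by (simp add: map_pmf_def[symmetric])
  finally show ?thesis .
qed

lemma variance_pow:
  fixes a :: "'a \<Rightarrow> real"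
  assumes "finite A"
  shows "(\<Sum>T\<in>Pow A. (sum a T - sum a A / 2)^2) = 2 ^ card A / 4 * (\<Sum>i\<in>A. (a i)^2)"
  using assms
proof (induction A rule: finite_induct)
  case empty thus ?case by simp
next
  case (insert x A)
  have disj: "Pow A \<inter> insert x ` Pow A = {}" using insert by auto
  have inj: "inj_on (insert x) (Pow A)" unfolding inj_on_def by (metis PowD insert.hyps(2) insert_ident subsetD)
  have fin: "finite (Pow A)" "finite (insert x ` Pow A)" using insert by auto
  have eq1: "\<And>T. T \<in> Pow A \<Longrightarrow> sum a (insert x T) = a x + sum a T"
    using insert by (auto intro!: sum.insert dest: finite_subset)
  have "(\<Sum>T\<in>Pow (insert x A). (sum a T - sum a (insert x A) / 2)^2)
     = (\<Sum>T\<in>Pow A. (sum a T - sum a (insert x A) / 2)^2) + (\<Sum>T\<in>insert x ` Pow A. (sum a T - sum a (insert x A) / 2)^2)"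
    unfolding Pow_insert by (rule sum.union_disjoint[OF fin disj])
  also have "(\<Sum>T\<in>insert x ` Pow A. (sum a T - sum a (insert x A) / 2)^2) = (\<Sum>T\<in>Pow A. (sum a (insert x T) - sum a (insert x A) / 2)^2)"
    by (rule sum.reindex[OF inj, unfolded comp_def])
  also have "\<dots> = (\<Sum>T\<in>Pow A. ((sum a T - sum a A / 2) + a x / 2)^2)"
    using insert by (intro sum.cong refl) (simp add: eq1 power2_eq_square field_simps)
  also have "(\<Sum>T\<in>Pow A. (sum a T - sum a (insert x A) / 2)^2) = (\<Sum>T\<in>Pow A. ((sum a T - sum a A / 2) - a x / 2)^2)"
    using insert by (intro sum.cong refl) (simp add: power2_eq_square field_simps)
  also have "(\<Sum>T\<in>Pow A. ((sum a T - sum a A / 2) - a x / 2)^2) + (\<Sum>T\<in>Pow A. ((sum a T - sum a A / 2) + a x / 2)^2)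
       = (\<Sum>T\<in>Pow A. 2 * (sum a T - sum a A / 2)^2 + (a x)^2 / 2)"
    by (subst sum.distrib[symmetric]) (intro sum.cong, auto simp: power2_eq_square algebra_simps)
  also have "\<dots> = 2 * (2 ^ card A / 4 * (\<Sum>i\<in>A. (a i)^2)) + 2 ^ card A * (a x)^2 / 2"
    using insert by (simp add: sum.distrib sum_distrib_left[symmetric] card_Pow)
  also have "\<dots> = 2 ^ card (insert x A) / 4 * (\<Sum>i\<in>insert x A. (a i)^2)"
    using insert by (simp add: algebra_simps)
  finally show ?case .
qed




lemma xos_ge: "finite F \<Longrightarrow> f \<in> F \<Longrightarrow> sum f X \<le> xos F X"
  unfolding xos_def by (rule Max_ge) auto

lemma xos_attained: "finite F \<Longrightarrow> F \<noteq> {} \<Longrightarrow> \<exists>f\<in>F. xos F X = sum f X"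
proof -
  assume "finite F" "F \<noteq> {}"
  hence "Max ((\<lambda>f. sum f X) ` F) \<in> (\<lambda>f. sum f X) ` F" by (intro Max_in) auto
  thus ?thesis unfolding xos_def by auto
qed

lemma xos_nonneg: "xos_rep A F \<Longrightarrow> X \<subseteq> A \<Longrightarrow> 0 \<le> xos F X"
proof -
  assume r: "xos_rep A F" and X: "X \<subseteq> A"
  have "F \<noteq> {}" using r unfolding xos_rep_def by simp
  then obtain f where "f \<in> F" by blast
  hence "0 \<le> sum f X" using r X by (intro sum_nonneg) (auto simp: xos_rep_def)
  also have "\<dots> \<le> xos F X" using r \<open>f\<in>F\<close> by (intro xos_ge) (auto simp: xos_rep_def)
  finally show ?thesis .
qed

lemma xos_mono: "xos_rep A F \<Longrightarrow> finite A \<Longrightarrow> X \<subseteq> Y \<Longrightarrow> Y \<subseteq> A \<Longrightarrow> xos F X \<le> xos F Y"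
proof -
  assume r: "xos_rep A F" and "finite A" "X \<subseteq> Y" "Y \<subseteq> A"
  obtain f where f: "f \<in> F" "xos F X = sum f X" using xos_attained[of F X] r by (auto simp: xos_rep_def)
  have "sum f X \<le> sum f Y" using r f \<open>finite A\<close> \<open>X \<subseteq> Y\<close> \<open>Y \<subseteq> A\<close>
    by (intro sum_mono2) (auto simp: xos_rep_def dest: finite_subset)
  also have "\<dots> \<le> xos F Y" using r f by (intro xos_ge) (auto simp: xos_rep_def)
  finally show ?thesis using f by simp
qed

lemma xos_empty: "F \<noteq> {} \<Longrightarrow> finite F \<Longrightarrow> xos F {} = 0"
  unfolding xos_def by simp

definition tbP :: "('a set \<Rightarrow> nat) \<Rightarrow> 'a set set \<Rightarrow> ('a set \<Rightarrow> real) \<Rightarrow> 'a set \<Rightarrow> bool" where "tbP rk D g S \<longleftrightarrow> S \<in> D \<and> (\<forall>S'\<in>D. g S' \<le> g S) \<and> (\<forall>S'\<in>D. g S' = g S \<longrightarrow> rk S \<le> rk S')"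

lemma tbP_unique: "inj_on rk D \<Longrightarrow> tbP rk D g S \<Longrightarrow> tbP rk D g S' \<Longrightarrow> S = S'"
proof -
  assume inj: "inj_on rk D" and P: "tbP rk D g S" and P': "tbP rk D g S'"
  have "g S = g S'" using P P' unfolding tbP_def by (meson order_antisym)
  hence "rk S = rk S'" using P P' unfolding tbP_def by (metis order_antisym)
  thus "S = S'" using inj P P' unfolding tbP_def inj_on_def by blast
qed

lemma tbP_exists:
  assumes "finite D" "D \<noteq> {}"
  shows "\<exists>S. tbP rk D g S"
proof -
  define m where "m = Max (g ` D)"
  define M where "M = {S\<in>D. g S = m}"
  have "m \<in> g ` D" unfolding m_def using assms by (intro Max_in) auto
  hence Mne: "M \<noteq> {}" unfolding M_def by auto
  have Mfin: "finite M" using assms unfolding M_def by auto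
  have "Min (rk ` M) \<in> rk ` M" using Mne Mfin by (intro Min_in) auto
  then obtain S where S: "S \<in> M" "rk S = Min (rk ` M)" by auto
  have "\<forall>S'\<in>D. g S' \<le> m" unfolding m_def using assms by auto
  moreover have "\<forall>S'\<in>M. rk S \<le> rk S'" using S Mfin by auto
  ultimately show ?thesis using S unfolding tbP_def M_def by auto
qed

lemma tb_argmax_tbP:
  assumes "finite D" "D \<noteq> {}" "inj_on rk D"
  shows "tbP rk D g (tb_argmax rk D g)"
proof -
  obtain S where S: "tbP rk D g S" using tbP_exists assms by blast
  have "tb_argmax rk D g = S" unfolding tb_argmax_def
    apply (rule the_equality)
    using S apply (simp add: tbP_def)
    using tbP_unique[OF assms(3) _ S] by (simp add: tbP_def)
  thus ?thesis using S by simp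
qed

lemma tb_argmax_eqI:
  assumes "inj_on rk D" "tbP rk D g S"
  shows "tb_argmax rk D g = S"
  unfolding tb_argmax_def
  apply (rule the_equality)
  using assms(2) apply (simp add: tbP_def)
  using tbP_unique[OF assms(1) _ assms(2)] by (simp add: tbP_def)

lemma tb_argmax_cong:
  assumes "\<And>X. X \<in> D \<Longrightarrow> g X = g' X"
  shows "tb_argmax rk D g = tb_argmax rk D g'"
  unfolding tb_argmax_def using assms by (intro arg_cong[where f=The] ext) auto

lemma tbP_shift_nonneg:
  assumes P: "tbP rk D g S" and iS: "i \<in> S" and d: "0 \<le> d"
    and g': "\<And>X. X \<in> D \<Longrightarrow> g' X = g X + (if i \<in> X then d else 0)"
  shows "tbP rk D g' S"
proof -
  have SD: "S \<in> D" and mx: "\<And>S'. S' \<in> D \<Longrightarrow> g S' \<le> g S"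
    and tie: "\<And>S'. S' \<in> D \<Longrightarrow> g S' = g S \<Longrightarrow> rk S \<le> rk S'"
    using P unfolding tbP_def by auto
  have gS: "g' S = g S + d" using g'[OF SD] iS by simp
  have 1: "g' S' \<le> g' S" if "S' \<in> D" for S'
  proof (cases "i \<in> S'")
    case True thus ?thesis using g'[OF that] gS mx[OF that] by simp
  next
    case False thus ?thesis using g'[OF that] gS mx[OF that] d by simp
  qed
  have 2: "rk S \<le> rk S'" if "S' \<in> D" "g' S' = g' S" for S'
  proof -
    have "g S' = g S"
    proof (cases "i \<in> S'")
      case True thus ?thesis using g'[OF that(1)] gS that(2) by simp
    next
      case False thus ?thesis using g'[OF that(1)] gS that(2) mx[OF that(1)] d by simp
    qed
    thus ?thesis using tie[OF that(1)] by simp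
  qed
  show ?thesis unfolding tbP_def using SD 1 2 by blast
qed

lemma tb_shift:
  assumes fin: "finite D" "D \<noteq> {}" and inj: "inj_on rk D"
    and iS: "i \<in> tb_argmax rk D g"
    and g': "\<And>X. X \<in> D \<Longrightarrow> g' X = g X + (if i \<in> X then d else 0)"
    and c: "0 \<le> d \<or> i \<in> tb_argmax rk D g'"
  shows "tb_argmax rk D g' = tb_argmax rk D g"
  using c
proof
  assume "0 \<le> d"
  thus ?thesis using tbP_shift_nonneg[OF tb_argmax_tbP[OF fin inj] iS _ g'] tb_argmax_eqI[OF inj] by blast
next
  assume i': "i \<in> tb_argmax rk D g'"
  show ?thesis
  proof (cases "0 \<le> d")
    case True
    thus ?thesis using tbP_shift_nonneg[OF tb_argmax_tbP[OF fin inj] iS _ g'] tb_argmax_eqI[OF inj] by blast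
  next
    case False
    have "tbP rk D g (tb_argmax rk D g')"
      by (rule tbP_shift_nonneg[OF tb_argmax_tbP[OF fin inj] i', of "-d"]) (use False g' in auto)
    thus ?thesis using tb_argmax_eqI[OF inj] by metis
  qed
qed

lemma threshold_upd: "threshold B alloc (b(i := y)) i = threshold B alloc b i"
  unfolding threshold_def by simp

lemma threshold_ge:
  assumes "0 \<le> x" "x \<le> B" "i \<in> alloc (b(i := x))"
  shows "x \<le> threshold B alloc b i"
  unfolding threshold_def using assms by (intro cSup_upper) (auto intro: bdd_aboveI[where M=B])

lemma threshold_le:
  assumes "0 \<le> x0" "x0 \<le> B" "i \<in> alloc (b(i := x0))"
    and "\<And>x. 0 \<le> x \<Longrightarrow> x \<le> B \<Longrightarrow> i \<in> alloc (b(i := x)) \<Longrightarrow> x \<le> z"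
  shows "threshold B alloc b i \<le> z"
  unfolding threshold_def using assms by (intro cSup_least) auto

definition monotone_alloc :: "'a set \<Rightarrow> real \<Rightarrow> (('a \<Rightarrow> real) \<Rightarrow> 'a set) \<Rightarrow> bool" where
  "monotone_alloc A B alloc \<longleftrightarrow> (\<forall>b i x. valid A B b \<longrightarrow> i \<in> A \<longrightarrow> 0 \<le> x \<longrightarrow> x \<le> b i \<longrightarrow>
      i \<in> alloc b \<longrightarrow> i \<in> alloc (b(i := x)))"

lemma threshold_truthful:
  assumes mono: "monotone_alloc A B alloc"
  shows "truthful A B (threshold_mech B alloc)"
  unfolding truthful_def
proof (intro allI impI)
  fix c b i assume c: "valid A B c" and b: "valid A B b" and i: "i \<in> A"
  let ?th = "threshold B alloc b i"
  have th': "threshold B alloc (b(i := c i)) i = ?th" by (rule threshold_upd)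
  have ci: "0 \<le> c i" "c i \<le> B" using c i by (auto simp: valid_def)
  have bi: "0 \<le> b i" "b i \<le> B" using b i by (auto simp: valid_def)
  show "utility i (c i) (threshold_mech B alloc b) \<le> utility i (c i) (threshold_mech B alloc (b(i := c i)))"
  proof (cases "i \<in> alloc (b(i := c i))")
    case True
    have "c i \<le> ?th" using threshold_ge[of "c i" B i alloc b] ci True by simp
    thus ?thesis using True th' by (auto simp: utility_def threshold_mech_def)
  next
    case False
    show ?thesis
    proof (cases "i \<in> alloc b")
      case True
      have "?th \<le> c i"
      proof (rule threshold_le[of "b i"])
        show "0 \<le> b i" "b i \<le> B" using bi by auto
        show "i \<in> alloc (b(i := b i))" using True by simp
        fix x assume x: "0 \<le> x" "x \<le> B" "i \<in> alloc (b(i := x))"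
        show "x \<le> c i"
        proof (rule ccontr)
          assume "\<not> x \<le> c i"
          have v: "valid A B (b(i := x))" using b x by (auto simp: valid_def)
          have "i \<in> alloc ((b(i := x))(i := c i))"
            using mono[unfolded monotone_alloc_def, rule_format, OF v i ci(1)] x \<open>\<not> x \<le> c i\<close> by auto
          thus False using False by simp
        qed
      qed
      thus ?thesis using True False by (auto simp: utility_def threshold_mech_def)
    next
      case False2: False
      thus ?thesis using False by (auto simp: utility_def threshold_mech_def)
    qed
  qed
qed




lemma is_mechD:
  assumes "is_mech S B M" "valid S B b"
  shows "fst (M b) \<subseteq> S" "\<And>i. i \<notin> fst (M b) \<Longrightarrow> snd (M b) i = 0"
    "\<And>i. i \<in> fst (M b) \<Longrightarrow> b i \<le> snd (M b) i"
proof -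
  from assms(1) have "\<forall>b. valid S B b \<longrightarrow>
        fst (M b) \<subseteq> S \<and> (\<forall>i. i \<notin> fst (M b) \<longrightarrow> snd (M b) i = 0) \<and>
        (\<forall>i\<in>fst (M b). b i \<le> snd (M b) i)" unfolding is_mech_def by (rule conjunct2)
  hence h: "fst (M b) \<subseteq> S \<and> (\<forall>i. i \<notin> fst (M b) \<longrightarrow> snd (M b) i = 0) \<and>
        (\<forall>i\<in>fst (M b). b i \<le> snd (M b) i)" using assms(2) by blast
  thus "fst (M b) \<subseteq> S" "\<And>i. i \<notin> fst (M b) \<Longrightarrow> snd (M b) i = 0"
    "\<And>i. i \<in> fst (M b) \<Longrightarrow> b i \<le> snd (M b) i" by auto
qed

lemma is_mech_cong: "is_mech S B M \<Longrightarrow> (\<And>j. j \<in> S \<Longrightarrow> b j = b' j) \<Longrightarrow> M b = M b'"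
proof -
  assume im: "is_mech S B M" and h: "\<And>j. j \<in> S \<Longrightarrow> b j = b' j"
  from im have "\<forall>b b'. (\<forall>j\<in>S. b j = b' j) \<longrightarrow> M b = M b'" unfolding is_mech_def by (rule conjunct1)
  thus ?thesis using h by blast
qed

lemma truthful_mono:
  assumes im: "is_mech S B M" and tr: "truthful S B M" and b: "valid S B b" and i: "i \<in> S"
    and x: "0 \<le> x" "x \<le> b i" and win: "i \<in> fst (M b)"
  shows "i \<in> fst (M (b(i := x)))"
proof (rule ccontr)
  assume lose: "i \<notin> fst (M (b(i := x)))"
  have c: "valid S B (b(i := x))" using b x i by (auto simp: valid_def)
  have "utility i x (M b) \<le> utility i x (M ((b(i := x))(i := x)))"
    using tr[unfolded truthful_def, rule_format, OF c b i] by simp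
  hence "utility i x (M b) \<le> 0" using lose by (simp add: utility_def)
  moreover have "b i \<le> snd (M b) i" using is_mechD(3)[OF im b win] .
  ultimately have "b i \<le> x" using win by (simp add: utility_def)
  hence "b(i := x) = b" using x by auto
  thus False using lose win by simp
qed

lemma truthful_pay:
  assumes im: "is_mech S B M" and tr: "truthful S B M" and b: "valid S B b" and i: "i \<in> S"
    and x: "0 \<le> x" "x \<le> B" and win: "i \<in> fst (M b)" and win': "i \<in> fst (M (b(i := x)))"
  shows "x \<le> snd (M b) i"
proof -
  have b': "valid S B (b(i := x))" using b x i by (auto simp: valid_def)
  have "utility i (b i) (M (b(i := x))) \<le> utility i (b i) (M ((b(i := x))(i := b i)))"
    using tr[unfolded truthful_def, rule_format, OF b b' i] by simp
  hence "snd (M (b(i := x))) i \<le> snd (M b) i" using win win' by (simp add: utility_def)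
  moreover have "x \<le> snd (M (b(i := x))) i" using is_mechD(3)[OF im b' win'] by (metis fun_upd_same)
  ultimately show ?thesis by simp
qed

lemma sum_upd: "finite X \<Longrightarrow> sum ((b::'a \<Rightarrow> real)(i := x)) X = sum b X + (if i \<in> X then x - b i else 0)"
proof -
  assume fin: "finite X"
  show ?thesis
  proof (cases "i \<in> X")
    case True
    have 1: "sum (b(i := x)) X = x + sum (b(i := x)) (X - {i})" using fin True by (simp add: sum.remove)
    have 2: "sum (b(i := x)) (X - {i}) = sum b (X - {i})" by (intro sum.cong) auto
    have 3: "sum b X = b i + sum b (X - {i})" using fin True by (simp add: sum.remove)
    show ?thesis unfolding 1 2 3 using True by simp
  next
    case False
    have "sum (b(i := x)) X = sum b X" using False by (intro sum.cong refl) auto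
    thus ?thesis using False by simp
  qed
qed

lemma fin_feas: "finite T \<Longrightarrow> finite {X. X \<subseteq> T \<and> P X}"
  by (rule finite_subset[of _ "Pow T"]) auto

lemma opt_val_cong:
  assumes "\<And>j. j \<in> T \<Longrightarrow> b j = b' j"
  shows "opt_val v T b B = opt_val v T b' B"
proof -
  have e: "\<And>X. X \<subseteq> T \<Longrightarrow> sum b X = sum b' X" using assms by (intro sum.cong refl) auto
  have "{X. X \<subseteq> T \<and> sum b X \<le> B} = {X. X \<subseteq> T \<and> sum b' X \<le> B}"
    apply (rule Collect_cong) using e by metis
  thus ?thesis unfolding opt_val_def by simp
qed

lemma opt_val_ge:
  assumes "finite T" "X \<subseteq> T" "sum b X \<le> B"
  shows "v X \<le> opt_val v T b B"
  unfolding opt_val_def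
  apply (rule Max_ge)
  using fin_feas[OF assms(1)] apply simp
  using assms(2,3) by simp

lemma opt_val_attained:
  assumes "finite T" "0 \<le> B"
  shows "\<exists>X. X \<subseteq> T \<and> sum b X \<le> B \<and> opt_val v T b B = v X"
proof -
  have fin: "finite {X. X \<subseteq> T \<and> sum b X \<le> B}" using fin_feas[OF assms(1)] .
  have "{} \<in> {X. X \<subseteq> T \<and> sum b X \<le> B}" using assms by simp
  hence ne: "{X. X \<subseteq> T \<and> sum b X \<le> B} \<noteq> {}" by blast
  have "opt_val v T b B \<in> v ` {X. X \<subseteq> T \<and> sum b X \<le> B}"
    unfolding opt_val_def using fin ne by (intro Max_in) auto
  then obtain X where "X \<in> {X. X \<subseteq> T \<and> sum b X \<le> B}" "opt_val v T b B = v X" by (rule imageE)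
  thus ?thesis by blast
qed

locale xsetup =
  fixes A :: "'a set" and B :: real and F :: "('a \<Rightarrow> real) set"
    and sel :: "'a set \<Rightarrow> ('a \<Rightarrow> real)" and rk :: "'a set \<Rightarrow> nat"
    and addm :: "'r \<Rightarrow> 'a set \<Rightarrow> ('a \<Rightarrow> real) \<Rightarrow> real \<Rightarrow> 'a mech" and R :: "'r pmf"
  assumes finA: "finite A" and neA: "A \<noteq> {}" and Bpos: "0 < B" and rep: "xos_rep A F"
    and selp: "\<And>S. S \<subseteq> A \<Longrightarrow> sel S \<in> F \<and> sum (sel S) S = xos F S"
    and rkinj: "inj_on rk (Pow A)" and aok: "addm_ok A B addm R"
begin

lemma finF: "finite F" and neF: "F \<noteq> {}" and Fnn: "\<And>f i. f \<in> F \<Longrightarrow> i \<in> A \<Longrightarrow> 0 \<le> f i"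
  using rep unfolding xos_rep_def by auto

definition tval where "tval T b = opt_val (xos F) T b B / (8 * B)"
definition Sst where "Sst T b = tb_argmax rk (Pow (A - T)) (\<lambda>S. xos F S - tval T b * sum b S)"

lemma rs_alloc_eq: "rs_alloc A B F sel rk addm w T b = fst (addm w (Sst T b) (sel (Sst T b)) B b)"
  by (simp add: rs_alloc_def Let_def Sst_def tval_def)

lemma D_props: "finite (Pow (A - T))" "Pow (A - T) \<noteq> {}" "inj_on rk (Pow (A - T))"
proof -
  show "finite (Pow (A - T))" using finA by simp
  show "Pow (A - T) \<noteq> {}" by blast
  have "Pow (A - T) \<subseteq> Pow A" by blast
  thus "inj_on rk (Pow (A - T))" using rkinj by (rule inj_on_subset[rotated])
qed

lemma Sst_tbP: "tbP rk (Pow (A - T)) (\<lambda>S. xos F S - tval T b * sum b S) (Sst T b)"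
  unfolding Sst_def using D_props by (intro tb_argmax_tbP)

lemma Sst_sub: "Sst T b \<subseteq> A - T"
  using Sst_tbP[of T b] by (simp add: tbP_def)

lemma addm_props:
  assumes "S \<subseteq> A" "w \<in> set_pmf R"
  shows "is_mech S B (addm w S (sel S) B)" "truthful S B (addm w S (sel S) B)"
        "budget_feasible S B (addm w S (sel S) B)"
proof -
  have nn: "\<And>i. i\<in>S \<Longrightarrow> 0 \<le> sel S i" using selp[OF assms(1)] Fnn assms(1) by auto
  have "\<forall>w\<in>set_pmf R. is_mech S B (addm w S (sel S) B) \<and> truthful S B (addm w S (sel S) B)
                         \<and> budget_feasible S B (addm w S (sel S) B)"
    using aok[unfolded addm_ok_def, rule_format, OF assms(1) nn] by (rule conjunct1)
  thus "is_mech S B (addm w S (sel S) B)" "truthful S B (addm w S (sel S) B)"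
        "budget_feasible S B (addm w S (sel S) B)" using assms(2) by auto
qed

lemma valid_sub: "valid A B b \<Longrightarrow> S \<subseteq> A \<Longrightarrow> valid S B b"
  unfolding valid_def by auto

lemma alloc_sub:
  assumes "valid A B b" "w \<in> set_pmf R"
  shows "rs_alloc A B F sel rk addm w T b \<subseteq> Sst T b"
proof -
  have S: "Sst T b \<subseteq> A" using Sst_sub by auto
  show ?thesis unfolding rs_alloc_eq
    using is_mechD(1)[OF addm_props(1)[OF S assms(2)] valid_sub[OF assms(1) S]] .
qed

lemma Sst_shift:
  assumes T: "T \<subseteq> A" and iT: "i \<notin> T" and iS: "i \<in> Sst T b"
    and c: "0 \<le> tval T b * (b i - x) \<or> i \<in> Sst T (b(i := x))"
  shows "Sst T (b(i := x)) = Sst T b"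
proof -
  have tv: "tval T (b(i := x)) = tval T b"
    unfolding tval_def using iT by (subst opt_val_cong[of T "b(i := x)" b]) auto
  define g where "g = (\<lambda>S. xos F S - tval T b * sum b S)"
  define g' where "g' = (\<lambda>S. xos F S - tval T b * sum (b(i := x)) S)"
  define d where "d = tval T b * (b i - x)"
  have S1: "Sst T b = tb_argmax rk (Pow (A - T)) g" unfolding Sst_def g_def ..
  have S2: "Sst T (b(i := x)) = tb_argmax rk (Pow (A - T)) g'" unfolding Sst_def g'_def tv ..
  have geq: "g' X = g X + (if i \<in> X then d else 0)" if "X \<in> Pow (A - T)" for X
  proof -
    have "finite X" using finA that by (auto dest: finite_subset)
    note eq = sum_upd[OF this, of b i x]
    show ?thesis unfolding g_def g'_def d_def eq by (simp add: algebra_simps)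
  qed
  have "tb_argmax rk (Pow (A - T)) g' = tb_argmax rk (Pow (A - T)) g"
    apply (rule tb_shift[OF D_props(1) D_props(2) D_props(3)])
    using iS S1 apply simp
     apply (rule geq, assumption)
    using c S2 d_def by simp
  thus ?thesis using S1 S2 by simp
qed

lemma tval_nonneg:
  assumes "valid A B b" "T \<subseteq> A"
  shows "0 \<le> tval T b"
proof -
  have "xos F {} \<le> opt_val (xos F) T b B"
    using opt_val_ge[of T "{}" b B "xos F"] finA assms(2) Bpos finite_subset by auto
  thus ?thesis unfolding tval_def using xos_empty[OF neF finF] Bpos by simp
qed

end



context xsetup begin

abbreviation "alloc w T \<equiv> rs_alloc A B F sel rk addm w T"

lemma valid_upd: "valid A B b \<Longrightarrow> 0 \<le> x \<Longrightarrow> x \<le> B \<Longrightarrow> valid A B (b(i := x))"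
  unfolding valid_def by auto

lemma win_notin_T:
  assumes "valid A B b" "w \<in> set_pmf R" "i \<in> alloc w T b"
  shows "i \<in> Sst T b" "i \<notin> T"
  using alloc_sub[OF assms(1,2)] Sst_sub assms(3) by blast+

lemma rs_monotone:
  assumes T: "T \<subseteq> A" and w: "w \<in> set_pmf R"
  shows "monotone_alloc A B (alloc w T)"
  unfolding monotone_alloc_def
proof (intro allI impI)
  fix b i x assume b: "valid A B b" and i: "i \<in> A" and x0: "0 \<le> x" and x1: "x \<le> b i"
    and win: "i \<in> alloc w T b"
  have iS: "i \<in> Sst T b" and iT: "i \<notin> T" using win_notin_T[OF b w win] by auto
  have "0 \<le> tval T b * (b i - x)" using tval_nonneg[OF b T] x1 by simp
  hence eq: "Sst T (b(i := x)) = Sst T b" using Sst_shift[OF T iT iS] by blast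
  define S where "S = Sst T b"
  have SA: "S \<subseteq> A" using Sst_sub S_def by blast
  have vS: "valid S B b" using valid_sub[OF b SA] .
  have "i \<in> fst (addm w S (sel S) B (b(i := x)))"
    by (rule truthful_mono[OF addm_props(1)[OF SA w] addm_props(2)[OF SA w] vS])
       (use iS S_def x0 x1 win rs_alloc_eq in auto)
  thus "i \<in> alloc w T (b(i := x))" unfolding rs_alloc_eq eq S_def .
qed

lemma rs_threshold_le_pay:
  assumes T: "T \<subseteq> A" and w: "w \<in> set_pmf R" and b: "valid A B b" and win: "i \<in> alloc w T b"
  shows "threshold B (alloc w T) b i \<le> snd (addm w (Sst T b) (sel (Sst T b)) B b) i"
proof -
  define S where "S = Sst T b"
  have SA: "S \<subseteq> A" using Sst_sub S_def by blast
  have vS: "valid S B b" using valid_sub[OF b SA] .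
  have iS: "i \<in> S" and iT: "i \<notin> T" using win_notin_T[OF b w win] S_def by auto
  have iA: "i \<in> A" using iS SA by blast
  have bi: "0 \<le> b i" "b i \<le> B" using b iA unfolding valid_def by auto
  show ?thesis unfolding S_def[symmetric]
  proof (rule threshold_le[of "b i"])
    show "0 \<le> b i" "b i \<le> B" using bi by auto
    show "i \<in> alloc w T (b(i := b i))" using win by simp
    fix x assume x: "0 \<le> x" "x \<le> B" "i \<in> alloc w T (b(i := x))"
    have b': "valid A B (b(i := x))" using valid_upd[OF b x(1,2)] .
    have "i \<in> Sst T (b(i := x))" using win_notin_T(1)[OF b' w x(3)] .
    hence eq: "Sst T (b(i := x)) = S" using Sst_shift[OF T iT] iS S_def by blast
    have w1: "i \<in> fst (addm w S (sel S) B b)" using win unfolding rs_alloc_eq S_def .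
    have w2: "i \<in> fst (addm w S (sel S) B (b(i := x)))" using x(3) unfolding rs_alloc_eq eq .
    show "x \<le> snd (addm w S (sel S) B b) i"
      by (rule truthful_pay[OF addm_props(1)[OF SA w] addm_props(2)[OF SA w] vS iS x(1,2) w1 w2])
  qed
qed

lemma rs_budget:
  assumes T: "T \<subseteq> A" and w: "w \<in> set_pmf R"
  shows "budget_feasible A B (rs_mech A B F sel rk addm w T)"
  unfolding budget_feasible_def
proof (intro allI impI)
  fix b assume b: "valid A B b"
  define S where "S = Sst T b"
  define M where "M = addm w S (sel S) B"
  have SA: "S \<subseteq> A" using Sst_sub S_def by blast
  have vS: "valid S B b" using valid_sub[OF b SA] .
  have imM: "is_mech S B M" using addm_props(1)[OF SA w] M_def by simp
  have W: "alloc w T b = fst (M b)" unfolding rs_alloc_eq M_def S_def ..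
  have WS: "fst (M b) \<subseteq> S" using is_mechD(1)[OF imM vS] .
  have pnn: "0 \<le> snd (M b) i" if "i \<in> S" for i
  proof (cases "i \<in> fst (M b)")
    case True
    have "b i \<le> snd (M b) i" using is_mechD(3)[OF imM vS True] .
    moreover have "0 \<le> b i" using vS that unfolding valid_def by auto
    ultimately show ?thesis by simp
  next
    case False thus ?thesis using is_mechD(2)[OF imM vS] by simp
  qed
  have "sum (snd (rs_mech A B F sel rk addm w T b)) A
      = (\<Sum>i\<in>A. if i \<in> fst (M b) then threshold B (alloc w T) b i else 0)"
    unfolding rs_mech_def threshold_mech_def W by simp
  also have "\<dots> = (\<Sum>i\<in>fst (M b). threshold B (alloc w T) b i)"
    using WS SA finA by (simp add: sum.If_cases Int_absorb1 order_trans)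
  also have "\<dots> \<le> (\<Sum>i\<in>fst (M b). snd (M b) i)"
    apply (rule sum_mono)
    using rs_threshold_le_pay[OF T w b] W unfolding M_def S_def by simp
  also have "\<dots> \<le> (\<Sum>i\<in>S. snd (M b) i)"
    using WS pnn SA finA by (intro sum_mono2) (auto dest: finite_subset)
  also have "\<dots> \<le> B" using addm_props(3)[OF SA w] vS unfolding budget_feasible_def M_def by blast
  finally show "sum (snd (rs_mech A B F sel rk addm w T b)) A \<le> B" .
qed

lemma rs_is_mech:
  assumes T: "T \<subseteq> A" and w: "w \<in> set_pmf R"
  shows "is_mech A B (rs_mech A B F sel rk addm w T)"
proof -
  have acong: "alloc w T b = alloc w T b'" if h: "\<And>j. j \<in> A \<Longrightarrow> b j = b' j" for b b'
  proof -
    have tv: "tval T b = tval T b'" unfolding tval_def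
      using T h by (subst opt_val_cong[of T b b']) auto
    have Seq: "Sst T b = Sst T b'" unfolding Sst_def tv
    proof (rule tb_argmax_cong)
      fix X assume "X \<in> Pow (A - T)"
      hence "sum b X = sum b' X" using h by (intro sum.cong refl) auto
      thus "xos F X - tval T b' * sum b X = xos F X - tval T b' * sum b' X" by simp
    qed
    define S where "S = Sst T b'"
    have SA: "S \<subseteq> A" using Sst_sub S_def by blast
    have "addm w S (sel S) B b = addm w S (sel S) B b'"
      by (rule is_mech_cong[OF addm_props(1)[OF SA w]]) (use h SA in blast)
    thus ?thesis unfolding rs_alloc_eq Seq S_def by simp
  qed
  have mcong: "rs_mech A B F sel rk addm w T b = rs_mech A B F sel rk addm w T b'"
    if h: "\<forall>j\<in>A. b j = b' j" for b b'
  proof -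
    have a1: "alloc w T b = alloc w T b'" using acong h by blast
    have th: "threshold B (alloc w T) b i = threshold B (alloc w T) b' i" for i
    proof -
      have "alloc w T (b(i := x)) = alloc w T (b'(i := x))" for x
        by (rule acong) (use h in auto)
      thus ?thesis unfolding threshold_def by simp
    qed
    show ?thesis unfolding rs_mech_def threshold_mech_def a1 th ..
  qed
  have vprop: "fst (rs_mech A B F sel rk addm w T b) \<subseteq> A \<and>
        (\<forall>i. i \<notin> fst (rs_mech A B F sel rk addm w T b) \<longrightarrow> snd (rs_mech A B F sel rk addm w T b) i = 0) \<and>
        (\<forall>i\<in>fst (rs_mech A B F sel rk addm w T b). b i \<le> snd (rs_mech A B F sel rk addm w T b) i)"
    if b: "valid A B b" for b
  proof (intro conjI allI impI ballI)
    have "alloc w T b \<subseteq> Sst T b" using alloc_sub[OF b w] .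
    thus "fst (rs_mech A B F sel rk addm w T b) \<subseteq> A" using Sst_sub[of T b]
      unfolding rs_mech_def threshold_mech_def by auto
  next
    fix i assume "i \<notin> fst (rs_mech A B F sel rk addm w T b)"
    thus "snd (rs_mech A B F sel rk addm w T b) i = 0" unfolding rs_mech_def threshold_mech_def by simp
  next
    fix i assume win: "i \<in> fst (rs_mech A B F sel rk addm w T b)"
    hence win': "i \<in> alloc w T b" unfolding rs_mech_def threshold_mech_def by simp
    have "i \<in> A" using win_notin_T(1)[OF b w win'] Sst_sub by blast
    hence "0 \<le> b i" "b i \<le> B" using b unfolding valid_def by auto
    hence "b i \<le> threshold B (alloc w T) b i" using win' by (intro threshold_ge) auto
    thus "b i \<le> snd (rs_mech A B F sel rk addm w T b) i" using win' unfolding rs_mech_def threshold_mech_def by simp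
  qed
  show ?thesis unfolding is_mech_def
  proof (rule conjI)
    show "\<forall>b b'. (\<forall>j\<in>A. b j = b' j) \<longrightarrow> rs_mech A B F sel rk addm w T b = rs_mech A B F sel rk addm w T b'"
      by (intro allI impI) (rule mcong)
    show "\<forall>b. valid A B b \<longrightarrow> fst (rs_mech A B F sel rk addm w T b) \<subseteq> A \<and>
        (\<forall>i. i \<notin> fst (rs_mech A B F sel rk addm w T b) \<longrightarrow> snd (rs_mech A B F sel rk addm w T b) i = 0) \<and>
        (\<forall>i\<in>fst (rs_mech A B F sel rk addm w T b). b i \<le> snd (rs_mech A B F sel rk addm w T b) i)"
      by (intro allI impI) (rule vprop)
  qed
qed

lemma best_single_props: "best_single A F \<in> A \<and> (\<forall>j\<in>A. xos F {j} \<le> xos F {best_single A F})"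
proof -
  have "Max ((\<lambda>j. xos F {j}) ` A) \<in> (\<lambda>j. xos F {j}) ` A" using finA neA by (intro Max_in) auto
  then obtain m where m: "m \<in> A" "Max ((\<lambda>j. xos F {j}) ` A) = xos F {m}" by (rule imageE)
  have "xos F {j} \<le> xos F {m}" if "j \<in> A" for j
  proof -
    have "xos F {j} \<le> Max ((\<lambda>j. xos F {j}) ` A)" using finA that by (intro Max_ge) auto
    thus ?thesis using m(2) by simp
  qed
  hence "\<exists>i. i \<in> A \<and> (\<forall>j\<in>A. xos F {j} \<le> xos F {i})" using m(1) by blast
  hence "best_single A F \<in> A \<and> (\<forall>j\<in>A. xos F {j} \<le> xos F {best_single A F})"
    unfolding best_single_def by (rule someI_ex)
  thus ?thesis .
qed

lemma single_ok: "is_mech A B (single_mech A B F) \<and> truthful A B (single_mech A B F) \<and> budget_feasible A B (single_mech A B F)"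
proof (intro conjI)
  have bs: "best_single A F \<in> A" using best_single_props by blast
  show "is_mech A B (single_mech A B F)" unfolding is_mech_def single_mech_def valid_def using bs by auto
  show "truthful A B (single_mech A B F)" unfolding truthful_def single_mech_def by simp
  show "budget_feasible A B (single_mech A B F)" unfolding budget_feasible_def single_mech_def
    using bs finA by simp
qed

lemma support_xos_main:
  assumes "M \<in> set_pmf (xos_main A B F sel rk addm R)"
  shows "M = single_mech A B F \<or> (\<exists>T w. T \<subseteq> A \<and> w \<in> set_pmf R \<and> M = rs_mech A B F sel rk addm w T)"
proof -
  have sp: "set_pmf (pmf_of_set (Pow A)) = Pow A" using finA by (intro set_pmf_of_set) auto
  obtain z where z: "z \<in> set_pmf (pair_pmf (bernoulli_pmf (1/2)) (pair_pmf (pmf_of_set (Pow A)) R))"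
    and Mz: "M = (\<lambda>(coin, T, w). if coin then rs_mech A B F sel rk addm w T else single_mech A B F) z"
    using assms unfolding xos_main_def by auto
  obtain coin T w where zz: "z = (coin, T, w)" by (cases z) auto
  have TA: "T \<subseteq> A" and wR: "w \<in> set_pmf R" using z zz sp by auto
  show ?thesis using Mz TA wR unfolding zz by (cases coin) auto
qed

lemma main_truthful: "univ_truthful_bf A B (xos_main A B F sel rk addm R)"
  unfolding univ_truthful_bf_def
proof
  fix M assume "M \<in> set_pmf (xos_main A B F sel rk addm R)"
  from support_xos_main[OF this] show "is_mech A B M \<and> truthful A B M \<and> budget_feasible A B M"
  proof
    assume "M = single_mech A B F" thus ?thesis using single_ok by (simp only:)
  next
    assume "\<exists>T w. T \<subseteq> A \<and> w \<in> set_pmf R \<and> M = rs_mech A B F sel rk addm w T"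
    then obtain T w where Tw: "T \<subseteq> A" "w \<in> set_pmf R" "M = rs_mech A B F sel rk addm w T" by blast
    have "truthful A B M" unfolding Tw(3) rs_mech_def by (rule threshold_truthful[OF rs_monotone[OF Tw(1,2)]])
    thus ?thesis using rs_is_mech[OF Tw(1,2)] rs_budget[OF Tw(1,2)] unfolding Tw(3) by (intro conjI)
  qed
qed

end



lemma exists_mid_subset:
  fixes c :: "'a \<Rightarrow> real"
  assumes "finite S"
  shows "0 \<le> B \<Longrightarrow> (\<forall>i\<in>S. 0 \<le> c i \<and> c i \<le> B) \<Longrightarrow> B < sum c S \<Longrightarrow> \<exists>W\<subseteq>S. B / 2 \<le> sum c W \<and> sum c W \<le> B"
  using assms
proof (induction S rule: finite_induct)
  case empty thus ?case by simp
next
  case (insert x S)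
  have hS: "\<forall>i\<in>S. 0 \<le> c i \<and> c i \<le> B" and hx: "0 \<le> c x" "c x \<le> B" using insert.prems(2) by auto
  have sx: "sum c (insert x S) = c x + sum c S" using insert.hyps by simp
  show ?case
  proof (cases "B < sum c S")
    case True
    then obtain W where "W \<subseteq> S" "B / 2 \<le> sum c W" "sum c W \<le> B" using insert.IH hS insert.prems(1) by blast
    thus ?thesis by blast
  next
    case False
    show ?thesis
    proof (cases "B / 2 \<le> sum c S")
      case True
      have "S \<subseteq> insert x S" by blast
      thus ?thesis using True False by (intro exI[of _ S]) simp
    next
      case False2: False
      have "B / 2 \<le> sum c {x}" using insert.prems(3) sx False2 by simp
      moreover have "sum c {x} \<le> B" using hx by simp
      moreover have "{x} \<subseteq> insert x S" by blast
      ultimately show ?thesis by blast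
    qed
  qed
qed

lemma integrable_pmf_bounded:
  fixes \<phi> :: "'b \<Rightarrow> real"
  assumes "\<And>w. w \<in> set_pmf P \<Longrightarrow> \<bar>\<phi> w\<bar> \<le> K"
  shows "integrable (measure_pmf P) \<phi>"
  by (rule measure_pmf.integrable_const_bound[where B=K]) (use assms in \<open>auto intro: AE_pmfI\<close>)

context xsetup begin

lemma rs_value:
  assumes c: "valid A B c" and T: "T \<subseteq> A" and X: "X \<subseteq> A" "sum c X \<le> B"
  shows "min (xos F (X - T) - opt_val (xos F) T c B / 8) (opt_val (xos F) T c B / 16)
     \<le> 3 * measure_pmf.expectation R (\<lambda>w. xos F (fst (rs_mech A B F sel rk addm w T c)))"
proof -
  define S where "S = Sst T c"
  define f where "f = sel S"
  define t where "t = tval T c"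
  define OT where "OT = opt_val (xos F) T c B"
  have t_def': "t = OT / (8 * B)" unfolding t_def OT_def tval_def ..
  have t0: "0 \<le> t" unfolding t_def using tval_nonneg[OF c T] .
  have P: "tbP rk (Pow (A - T)) (\<lambda>S. xos F S - t * sum c S) S" unfolding S_def t_def by (rule Sst_tbP)
  have SAT: "S \<subseteq> A - T" using P unfolding tbP_def by simp
  have SA: "S \<subseteq> A" using SAT by blast
  have finS: "finite S" using SA finA by (rule finite_subset)
  have gmax: "xos F Y - t * sum c Y \<le> xos F S - t * sum c S" if "Y \<subseteq> A - T" for Y
    using P that unfolding tbP_def by blast
  have fF: "f \<in> F" and fS: "sum f S = xos F S" using selp[OF SA] unfolding f_def by auto
  have fnn: "\<And>i. i \<in> S \<Longrightarrow> 0 \<le> f i" using Fnn[OF fF] SA by blast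
  have fle: "\<And>Y. sum f Y \<le> xos F Y" using xos_ge[OF finF fF] .
  have cS: "\<And>i. i \<in> A \<Longrightarrow> 0 \<le> c i \<and> c i \<le> B" using c unfolding valid_def by blast
  have vS: "valid S B c" using valid_sub[OF c SA] .
  have key: "min (xos F (X - T) - OT / 8) (OT / 16) \<le> opt_val (\<lambda>Y. sum f Y) S c B"
  proof (cases "sum c S \<le> B")
    case True
    have XT: "X - T \<subseteq> A - T" using X(1) by blast
    have h1: "xos F (X - T) - t * sum c (X - T) \<le> xos F S - t * sum c S" using gmax[OF XT] .
    have finX: "finite X" using X(1) finA by (rule finite_subset)
    have "sum c (X - T) \<le> sum c X"
    proof (rule sum_mono2[OF finX])
      show "X - T \<subseteq> X" by blast
      fix i assume "i \<in> X - (X - T)" thus "0 \<le> c i" using cS X(1) by blast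
    qed
    hence cXT: "sum c (X - T) \<le> B" using X(2) by simp
    have cS0: "0 \<le> sum c S" using SA cS by (intro sum_nonneg) blast
    have h2: "t * sum c (X - T) \<le> t * B" using cXT t0 by (rule mult_left_mono)
    have h3: "0 \<le> t * sum c S" using t0 cS0 by (rule mult_nonneg_nonneg)
    from h1 h2 h3 have "xos F (X - T) - t * B \<le> xos F S" by linarith
    moreover have "t * B = OT / 8" unfolding t_def' using Bpos by simp
    moreover have "sum f S \<le> opt_val (\<lambda>Y. sum f Y) S c B"
      using opt_val_ge[OF finS subset_refl True, of "\<lambda>Y. sum f Y"] .
    ultimately have "xos F (X - T) - OT / 8 \<le> opt_val (\<lambda>Y. sum f Y) S c B" using fS by simp
    thus ?thesis by (rule min.coboundedI1)
  next
    case False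
    have cSS: "\<forall>i\<in>S. 0 \<le> c i \<and> c i \<le> B" using cS SA by blast
    have BS: "B < sum c S" using False by simp
    obtain W where W: "W \<subseteq> S" "B / 2 \<le> sum c W" "sum c W \<le> B"
      using exists_mid_subset[OF finS _ cSS BS] Bpos by auto
    have SW: "S - W \<subseteq> A - T" using SAT by blast
    have e1: "xos F (S - W) - t * sum c (S - W) \<le> xos F S - t * sum c S" using gmax[OF SW] .
    have e2: "sum f S = sum f (S - W) + sum f W" using sum.subset_diff[OF W(1) finS] .
    have e3: "sum c S = sum c (S - W) + sum c W" using sum.subset_diff[OF W(1) finS] .
    have e4: "sum f (S - W) \<le> xos F (S - W)" by (rule fle)
    have e5: "t * sum c S = t * sum c (S - W) + t * sum c W" unfolding e3 by (simp add: distrib_left)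
    from e1 e2 e4 e5 fS have "t * sum c W \<le> sum f W" by linarith
    moreover have "t * (B / 2) \<le> t * sum c W" using t0 W(2) by (rule mult_left_mono[rotated])
    moreover have "t * (B / 2) = OT / 16" unfolding t_def' using Bpos by simp
    moreover have "sum f W \<le> opt_val (\<lambda>Y. sum f Y) S c B"
      using opt_val_ge[OF finS W(1) W(3), of "\<lambda>Y. sum f Y"] .
    ultimately have "OT / 16 \<le> opt_val (\<lambda>Y. sum f Y) S c B" by linarith
    thus ?thesis by (rule min.coboundedI2)
  qed
  have nnf: "\<And>i. i \<in> S \<Longrightarrow> 0 \<le> f i" by (rule fnn)
  have approx: "opt_val (\<lambda>Y. sum f Y) S c B \<le> 3 * measure_pmf.expectation R (\<lambda>w. sum f (fst (addm w S f B c)))"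
  proof -
    have nn': "\<forall>i\<in>S. 0 \<le> f i" using fnn by blast
    note H = aok[unfolded addm_ok_def, THEN spec[of _ S], THEN spec[of _ f]]
    note H2 = conjunct2[OF mp[OF mp[OF H SA] nn']]
    show ?thesis using mp[OF spec[OF H2, of c] vS] .
  qed
  have sub: "fst (addm w S f B c) \<subseteq> S" if "w \<in> set_pmf R" for w
    using is_mechD(1)[OF addm_props(1)[OF SA that] vS] unfolding f_def .
  have b1: "\<bar>sum f (fst (addm w S f B c))\<bar> \<le> sum f S" if "w \<in> set_pmf R" for w
  proof -
    have "0 \<le> sum f (fst (addm w S f B c))" using sub[OF that] fnn by (intro sum_nonneg) auto
    moreover have "sum f (fst (addm w S f B c)) \<le> sum f S"
      using sub[OF that] fnn finS by (intro sum_mono2) auto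
    ultimately show ?thesis by simp
  qed
  have b2: "\<bar>xos F (fst (addm w S f B c))\<bar> \<le> xos F A" if "w \<in> set_pmf R" for w
  proof -
    have "0 \<le> xos F (fst (addm w S f B c))" using sub[OF that] SA by (intro xos_nonneg[OF rep]) auto
    moreover have "xos F (fst (addm w S f B c)) \<le> xos F A"
      using sub[OF that] SA by (intro xos_mono[OF rep finA]) auto
    ultimately show ?thesis by simp
  qed
  have rsv: "fst (rs_mech A B F sel rk addm w T c) = fst (addm w S f B c)" for w
    unfolding rs_mech_def threshold_mech_def rs_alloc_eq S_def f_def by simp
  have "measure_pmf.expectation R (\<lambda>w. sum f (fst (addm w S f B c)))
        \<le> measure_pmf.expectation R (\<lambda>w. xos F (fst (addm w S f B c)))"
    by (rule integral_mono_AE[OF integrable_pmf_bounded integrable_pmf_bounded])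
       (use b1 b2 fle in \<open>auto intro: AE_pmfI\<close>)
  also have "\<dots> = measure_pmf.expectation R (\<lambda>w. xos F (fst (rs_mech A B F sel rk addm w T c)))"
    unfolding rsv ..
  finally show ?thesis using key approx unfolding OT_def by linarith
qed

end



context xsetup begin

definition phi where "phi c T w = (if T \<subseteq> A \<and> w \<in> set_pmf R then xos F (fst (rs_mech A B F sel rk addm w T c)) else 0)"

lemma phi_bound:
  assumes c: "valid A B c"
  shows "0 \<le> phi c T w \<and> phi c T w \<le> xos F A"
proof (cases "T \<subseteq> A \<and> w \<in> set_pmf R")
  case True
  have sub: "fst (rs_mech A B F sel rk addm w T c) \<subseteq> A"
    using is_mechD(1)[OF rs_is_mech c] True by blast
  show ?thesis unfolding phi_def using True sub
    xos_nonneg[OF rep sub] xos_mono[OF rep finA sub subset_refl] by simp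
next
  case False
  hence "phi c T w = 0" unfolding phi_def by (simp only: if_False)
  thus ?thesis using xos_nonneg[OF rep subset_refl] by simp
qed

lemma main_expect:
  assumes c: "valid A B c"
  shows "measure_pmf.expectation (xos_main A B F sel rk addm R) (\<lambda>M. xos F (fst (M c)))
     = (\<Sum>T\<in>Pow A. measure_pmf.expectation R (phi c T)) / card (Pow A) * (1/2)
       + xos F {best_single A F} * (1/2)"
proof -
  define v1 where "v1 = xos F {best_single A F}"
  define H where "H = (\<lambda>(coin::bool, T::'a set, w::'r). if coin then phi c T w else v1)"
  define K where "K = xos F A + \<bar>v1\<bar>"
  have Hb: "\<bar>H z\<bar> \<le> K" for z
  proof -
    obtain coin T w where z: "z = (coin, T, w)" by (cases z) auto
    show ?thesis using phi_bound[OF c, of T w] unfolding H_def K_def z by auto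
  qed
  have Hb2: "\<bar>H (coin, y)\<bar> \<le> K" for coin y using Hb .
  have Hb3: "\<bar>phi c T w\<bar> \<le> K" for T w using Hb[of "(True, T, w)"] unfolding H_def by simp
  have fin: "finite (Pow A)" using finA by simp
  have ne: "Pow A \<noteq> {}" by blast
  have sp: "set_pmf (pmf_of_set (Pow A)) = Pow A" using set_pmf_of_set[OF ne fin] .
  let ?g = "\<lambda>(coin, T, w). if coin then rs_mech A B F sel rk addm w T else single_mech A B F"
  let ?P = "pair_pmf (bernoulli_pmf (1/2)) (pair_pmf (pmf_of_set (Pow A)) R)"
  have "measure_pmf.expectation (xos_main A B F sel rk addm R) (\<lambda>M. xos F (fst (M c)))
      = measure_pmf.expectation ?P (\<lambda>z. xos F (fst (?g z c)))"
    unfolding xos_main_def by simp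
  also have "\<dots> = measure_pmf.expectation ?P H"
  proof (rule integral_cong_AE)
    show "AE z in measure_pmf ?P. xos F (fst (?g z c)) = H z"
    proof (rule AE_pmfI)
      fix z assume z: "z \<in> set_pmf ?P"
      obtain coin T w where zz: "z = (coin, T, w)" by (cases z) auto
      have "T \<subseteq> A" "w \<in> set_pmf R" using z sp unfolding zz by auto
      thus "xos F (fst (?g z c)) = H z" unfolding zz H_def phi_def v1_def single_mech_def by simp
    qed
  qed simp_all
  also have "\<dots> = measure_pmf.expectation (bernoulli_pmf (1/2))
      (\<lambda>coin. measure_pmf.expectation (pair_pmf (pmf_of_set (Pow A)) R) (\<lambda>y. H (coin, y)))"
    by (rule integral_pair_pmf_bounded[OF Hb])
  also have "\<dots> = measure_pmf.expectation (pair_pmf (pmf_of_set (Pow A)) R) (\<lambda>y. H (True, y)) * (1/2)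
       + measure_pmf.expectation (pair_pmf (pmf_of_set (Pow A)) R) (\<lambda>y. H (False, y)) * (1/2)"
    by simp
  also have "measure_pmf.expectation (pair_pmf (pmf_of_set (Pow A)) R) (\<lambda>y. H (False, y)) = v1"
    unfolding H_def by simp
  also have "measure_pmf.expectation (pair_pmf (pmf_of_set (Pow A)) R) (\<lambda>y. H (True, y))
      = measure_pmf.expectation (pair_pmf (pmf_of_set (Pow A)) R) (\<lambda>y. phi c (fst y) (snd y))"
    unfolding H_def by (simp add: case_prod_beta)
  also have "\<dots> = measure_pmf.expectation (pmf_of_set (Pow A)) (\<lambda>T. measure_pmf.expectation R (\<lambda>w. phi c (fst (T, w)) (snd (T, w))))"
    by (rule integral_pair_pmf_bounded) (rule Hb3)
  also have "\<dots> = (\<Sum>T\<in>Pow A. measure_pmf.expectation R (phi c T)) / card (Pow A)"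
    by (simp add: integral_pmf_of_set[OF ne fin])
  finally show ?thesis unfolding v1_def .
qed

end



context xsetup begin

lemma main_approx:
  assumes c: "valid A B c"
  shows "opt_val (xos F) A c B \<le> 512 * measure_pmf.expectation (xos_main A B F sel rk addm R) (\<lambda>M. xos F (fst (M c)))"
proof -
  define OPT where "OPT = opt_val (xos F) A c B"
  define E where "E = measure_pmf.expectation (xos_main A B F sel rk addm R) (\<lambda>M. xos F (fst (M c)))"
  define v1 where "v1 = xos F {best_single A F}"
  define Q where "Q T = measure_pmf.expectation R (phi c T)" for T
  define N where "N = (2::real) ^ card A"
  have N0: "0 < N" unfolding N_def by simp
  have cardP: "real (card (Pow A)) = N" unfolding N_def using finA by (simp add: card_Pow)
  have Eeq: "E = (\<Sum>T\<in>Pow A. Q T) / N * (1/2) + v1 * (1/2)"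
    unfolding E_def Q_def v1_def using main_expect[OF c] cardP by simp
  have cA: "\<And>i. i \<in> A \<Longrightarrow> 0 \<le> c i \<and> c i \<le> B" using c unfolding valid_def by blast
  have Q0: "0 \<le> Q T" for T
    unfolding Q_def by (rule integral_nonneg_AE) (use phi_bound[OF c] in auto)
  have SQ0: "0 \<le> (\<Sum>T\<in>Pow A. Q T)" by (intro sum_nonneg Q0)
  have bs: "best_single A F \<in> A" and v1max: "\<And>j. j \<in> A \<Longrightarrow> xos F {j} \<le> v1"
    using best_single_props unfolding v1_def by auto
  have v10: "0 \<le> v1" unfolding v1_def using bs by (intro xos_nonneg[OF rep]) auto
  obtain X where X: "X \<subseteq> A" "sum c X \<le> B" "OPT = xos F X"
    using opt_val_attained[OF finA, of B c "xos F"] Bpos unfolding OPT_def by auto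
  have finX: "finite X" using X(1) finA by (rule finite_subset)
  obtain fs where fs: "fs \<in> F" "xos F X = sum fs X" using xos_attained[OF finF neF] by blast
  have fsnn: "\<And>i. i \<in> A \<Longrightarrow> 0 \<le> fs i" using Fnn[OF fs(1)] .
  have fsle: "\<And>Y. sum fs Y \<le> xos F Y" using xos_ge[OF finF fs(1)] .
  have OPT0: "0 \<le> OPT" unfolding X(3) using X(1) by (intro xos_nonneg[OF rep])
  have QT: "min (xos F (X - T) - opt_val (xos F) T c B / 8) (opt_val (xos F) T c B / 16) \<le> 3 * Q T"
    if T: "T \<subseteq> A" for T
  proof -
    have "Q T = measure_pmf.expectation R (\<lambda>w. xos F (fst (rs_mech A B F sel rk addm w T c)))"
      unfolding Q_def by (rule integral_cong_AE) (use T in \<open>auto intro!: AE_pmfI simp: phi_def\<close>)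
    thus ?thesis using rs_value[OF c T X(1,2)] by simp
  qed
  show ?thesis
  proof (cases "OPT / 16 \<le> v1")
    case True
    have "v1 * (1/2) \<le> E" unfolding Eeq using SQ0 N0 by simp
    hence "OPT \<le> 512 * E" using True OPT0 by linarith
    thus ?thesis unfolding OPT_def E_def .
  next
    case False
    hence v1s: "v1 < OPT / 16" by simp
    hence OPTpos: "0 < OPT" using v10 by linarith
    define a where "a i = (if i \<in> X then fs i else 0)" for i
    have suma: "sum a T = sum fs (T \<inter> X)" if "finite T" for T
      unfolding a_def using sum.inter_restrict[OF that, of fs X] by simp
    have sumA: "sum a A = OPT"
    proof -
      have "A \<inter> X = X" using X(1) by blast
      thus ?thesis using suma[OF finA] X(3) fs(2) by simp
    qed
    have a0: "0 \<le> a i" for i unfolding a_def using fsnn X(1) by auto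
    have asmall: "a i \<le> OPT / 16" for i
    proof (cases "i \<in> X")
      case True
      have "fs i = sum fs {i}" by simp
      also have "\<dots> \<le> xos F {i}" by (rule fsle)
      also have "\<dots> \<le> v1" using v1max True X(1) by blast
      finally show ?thesis unfolding a_def using True v1s by simp
    next
      case False thus ?thesis unfolding a_def using OPTpos by simp
    qed
    have sq: "(a i)^2 \<le> OPT / 16 * a i" for i
      unfolding power2_eq_square using mult_right_mono[OF asmall a0] .
    have sumsq: "(\<Sum>i\<in>A. (a i)^2) \<le> OPT^2 / 16"
    proof -
      have "(\<Sum>i\<in>A. (a i)^2) \<le> (\<Sum>i\<in>A. OPT / 16 * a i)" by (intro sum_mono sq)
      also have "\<dots> = OPT / 16 * sum a A" by (rule sum_distrib_left[symmetric])
      also have "\<dots> = OPT / 16 * OPT" using sumA by simp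
      finally show ?thesis by (simp add: power2_eq_square)
    qed
    have var: "(\<Sum>T\<in>Pow A. (sum a T - OPT / 2)^2) \<le> N * OPT^2 / 64"
    proof -
      have "(\<Sum>T\<in>Pow A. (sum a T - OPT / 2)^2) = N / 4 * (\<Sum>i\<in>A. (a i)^2)"
        using variance_pow[OF finA, of a] sumA unfolding N_def by simp
      also have "\<dots> \<le> N / 4 * (OPT^2 / 16)" using sumsq N0 by (intro mult_left_mono) auto
      finally show ?thesis by simp
    qed
    define Bd where "Bd = {T \<in> Pow A. OPT / 4 \<le> \<bar>sum a T - OPT / 2\<bar>}"
    define G where "G = Pow A - Bd"
    have BdP: "Bd \<subseteq> Pow A" unfolding Bd_def by blast
    have finP: "finite (Pow A)" using finA by simp
    have finBd: "finite Bd" using finite_subset[OF BdP finP] .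
    have "real (card Bd) * (OPT / 4)^2 = (\<Sum>T\<in>Bd. (OPT / 4)^2)" by simp
    also have "\<dots> \<le> (\<Sum>T\<in>Bd. (sum a T - OPT / 2)^2)"
    proof (rule sum_mono)
      fix T assume "T \<in> Bd"
      hence h: "OPT / 4 \<le> \<bar>sum a T - OPT / 2\<bar>" unfolding Bd_def by blast
      have "(OPT / 4)^2 \<le> \<bar>sum a T - OPT / 2\<bar>^2" using h OPTpos by (intro power_mono) auto
      thus "(OPT / 4)^2 \<le> (sum a T - OPT / 2)^2" by simp
    qed
    also have "\<dots> \<le> (\<Sum>T\<in>Pow A. (sum a T - OPT / 2)^2)"
      using BdP finP by (intro sum_mono2) auto
    also have "\<dots> \<le> N * OPT^2 / 64" by (rule var)
    finally have "real (card Bd) * (OPT / 4)^2 \<le> N * OPT^2 / 64" .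
    hence "real (card Bd) * OPT^2 \<le> (N / 4) * OPT^2" by (simp add: power_divide field_simps)
    hence cBd: "real (card Bd) \<le> N / 4" using OPTpos by (simp add: mult_le_cancel_right)
    have cG: "3 / 4 * N \<le> real (card G)"
    proof -
      have "card G = card (Pow A) - card Bd" unfolding G_def using card_Diff_subset[OF finBd BdP] .
      moreover have "card Bd \<le> card (Pow A)" using card_mono[OF finP BdP] .
      ultimately have "real (card G) = N - real (card Bd)" using cardP by (simp add: of_nat_diff)
      thus ?thesis using cBd by simp
    qed
    have goodQ: "OPT / 192 \<le> Q T" if TG: "T \<in> G" for T
    proof -
      have TA: "T \<subseteq> A" using TG unfolding G_def by blast
      have finT: "finite T" using TA finA by (rule finite_subset)
      have close: "\<bar>sum a T - OPT / 2\<bar> < OPT / 4" using TG TA unfolding G_def Bd_def by auto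
      have sT: "sum a T = sum fs (X \<inter> T)" using suma[OF finT] by (simp add: Int_commute)
      have split: "sum fs X = sum fs (X \<inter> T) + sum fs (X - T)" using sum.Int_Diff[OF finX] .
      define OT where "OT = opt_val (xos F) T c B"
      have cXT: "sum c (X \<inter> T) \<le> B"
      proof -
        have "sum c (X \<inter> T) \<le> sum c X"
        proof (rule sum_mono2[OF finX])
          show "X \<inter> T \<subseteq> X" by blast
          fix i assume "i \<in> X - X \<inter> T" thus "0 \<le> c i" using cA X(1) by blast
        qed
        thus ?thesis using X(2) by simp
      qed
      have OT1: "xos F (X \<inter> T) \<le> OT" unfolding OT_def
        by (rule opt_val_ge[OF finT _ cXT]) blast
      have OT2: "OT \<le> OPT"
      proof -
        obtain Y where Y: "Y \<subseteq> T" "sum c Y \<le> B" "OT = xos F Y"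
          using opt_val_attained[OF finT, of B c "xos F"] Bpos unfolding OT_def by auto
        have "xos F Y \<le> OPT" unfolding OPT_def using Y TA by (intro opt_val_ge[OF finA]) auto
        thus ?thesis using Y(3) by simp
      qed
      have l1: "OPT / 4 < sum a T" using close by linarith
      have l2: "OPT / 4 < OPT - sum a T" using close by linarith
      have v1': "OPT / 4 < xos F (X - T)"
        using l2 sT split fs(2) X(3) fsle[of "X - T"] by linarith
      have v2': "OPT / 4 < OT" using l1 sT fsle[of "X \<inter> T"] OT1 by linarith
      have "OPT / 64 \<le> min (xos F (X - T) - OT / 8) (OT / 16)"
        using v1' v2' OT2 by simp
      thus ?thesis using QT[OF TA] unfolding OT_def by linarith
    qed
    have GP: "G \<subseteq> Pow A" unfolding G_def by blast
    have "real (card G) * (OPT / 192) = (\<Sum>T\<in>G. OPT / 192)" by simp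
    also have "\<dots> \<le> (\<Sum>T\<in>G. Q T)" by (rule sum_mono) (rule goodQ)
    also have "\<dots> \<le> (\<Sum>T\<in>Pow A. Q T)" using GP finP Q0 by (intro sum_mono2) auto
    finally have f1: "real (card G) * (OPT / 192) \<le> (\<Sum>T\<in>Pow A. Q T)" .
    have "3 / 4 * N * (OPT / 192) \<le> real (card G) * (OPT / 192)"
      using cG OPTpos by (intro mult_right_mono) auto
    hence "3 / 4 * N * (OPT / 192) \<le> (\<Sum>T\<in>Pow A. Q T)" using f1 by linarith
    hence "OPT / 256 \<le> (\<Sum>T\<in>Pow A. Q T) / N" using N0 by (simp add: field_simps)
    hence "OPT / 512 \<le> E" unfolding Eeq using v10 by (simp add: field_simps)
    hence "OPT \<le> 512 * E" by simp
    thus ?thesis unfolding OPT_def E_def .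
  qed
qed

end

theorem theorem3p1:
  shows "\<exists>C::real. \<forall>(A::'a set) (B::real) (F::('a \<Rightarrow> real) set)
            (sel::'a set \<Rightarrow> ('a \<Rightarrow> real)) (rk::'a set \<Rightarrow> nat)
            (addm::'r \<Rightarrow> 'a set \<Rightarrow> ('a \<Rightarrow> real) \<Rightarrow> real \<Rightarrow> 'a mech) (R::'r pmf).
     finite A \<longrightarrow> A \<noteq> {} \<longrightarrow> 0 < B \<longrightarrow> xos_rep A F \<longrightarrow>
     (\<forall>S\<subseteq>A. sel S \<in> F \<and> sum (sel S) S = xos F S) \<longrightarrow>
     inj_on rk (Pow A) \<longrightarrow> addm_ok A B addm R \<longrightarrow>
       univ_truthful_bf A B (xos_main A B F sel rk addm R) \<and>
       (\<forall>c. valid A B c \<longrightarrow>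
          opt_val (xos F) A c B
            \<le> C * measure_pmf.expectation (xos_main A B F sel rk addm R)
                    (\<lambda>M. xos F (fst (M c))))"
proof (rule exI[of _ 512], intro allI impI)
  fix A :: "'a set" and B :: real and F :: "('a \<Rightarrow> real) set"
    and sel :: "'a set \<Rightarrow> ('a \<Rightarrow> real)" and rk :: "'a set \<Rightarrow> nat"
    and addm :: "'r \<Rightarrow> 'a set \<Rightarrow> ('a \<Rightarrow> real) \<Rightarrow> real \<Rightarrow> 'a mech" and R :: "'r pmf"
  assume h1: "finite A" and h2: "A \<noteq> {}" and h3: "0 < B" and h4: "xos_rep A F"
    and h5: "\<forall>S\<subseteq>A. sel S \<in> F \<and> sum (sel S) S = xos F S"
    and h6: "inj_on rk (Pow A)" and h7: "addm_ok A B addm R"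
  interpret xsetup A B F sel rk addm R
    by (rule xsetup.intro[OF h1 h2 h3 h4 _ h6 h7]) (use h5 in blast)
  show "univ_truthful_bf A B (xos_main A B F sel rk addm R) \<and>
       (\<forall>c. valid A B c \<longrightarrow>
          opt_val (xos F) A c B
            \<le> 512 * measure_pmf.expectation (xos_main A B F sel rk addm R)
                    (\<lambda>M. xos F (fst (M c))))"
    using main_truthful main_approx by blast
qed

end
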